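(* Let $\alpha,\beta,\gamma,\Delta\in\mathbb{C}$ with $(\Delta,\beta)\neq(0,0)$. Consider extensions of conformal $\mathrm{HV}$-modules $$0\to V(\alpha,\beta,\Delta)\to E\to\mathbb{C}c_\gamma\to0,$$ realized as $E=\mathbb{C}[\partial]v_\Delta\oplus\mathbb{C}c_\gamma$ with $\mathbb{C}[\partial]v_\Delta\cong V(\alpha,\beta,\Delta)$ a submodule and $L_\lambda c_\gamma=f(\partial,\lambda)v_\Delta$, $N_\lambda c_\gamma=k(\partial,\lambda)v_\Delta$, $\partial c_\gamma=\gamma c_\gamma+a(\partial)v_\Delta$, with $f,k\in\mathbb{C}[\partial,\lambda]$, $a\in\mathbb{C}[\partial]$. Nontrivial extensions of this form exist if and only if $\alpha+\gamma=0$, $\beta=0$ and $\Delta=1$. The unique nontrivial extension is given, up to equivalence, by $k=0$ and $f(\partial,\lambda)=a(\partial)=a_0$ with $a_0\in\mathbb{C}^*$. Furthermore, all trivial extensions correspond to triples $f(\partial,\lambda)=(\alpha+\gamma+\Delta\lambda)\phi(\partial+\lambda)$, $k(\partial,\lambda)=\beta\phi(\partial+\lambda)$, $a(\partial)=(\partial-\gamma)\phi(\partial)$, with $\phi$ a polynomial.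
   Context: A conformal module over a Lie conformal algebra $R$ is a $\mathbb{C}[\partial]$-module $V$ with $a\mapsto a_\lambda\in\mathrm{End}_{\mathbb{C}}(V)\otimes\mathbb{C}[\lambda]$ satisfying $[a_\lambda,b_\mu]=[a_\lambda b]_{\lambda+\mu}$ and $(\partial a)_\lambda=[\partial,a_\lambda]=-\lambda a_\lambda$. The Heisenberg–Virasoro conformal algebra $\mathrm{HV}$ is the free $\mathbb{C}[\partial]$-module with basis $L,N$ and $\lambda$-brackets $[L_\lambda L]=(\partial+2\lambda)L$, $[L_\lambda N]=(\partial+\lambda)N$, $[N_\lambda L]=\lambda N$, $[N_\lambda N]=0$. $V(\alpha,\beta,\Delta)=\mathbb{C}[\partial]v_\Delta$ with $L_\lambda v_\Delta=(\partial+\alpha+\Delta\lambda)v_\Delta$, $N_\lambda v_\Delta=\beta v_\Delta$. $\mathbb{C}c_\gamma$ is the one-dimensional module with $\partial c_\gamma=\gamma c_\gamma$ and zero $\lambda$-actions. An extension of $W$ by $V$ is an exact sequence $0\to V\to E\to W\to0$ of conformal modules; equivalence via a module map of middle terms compatible with identities; trivial means equivalent to the direct sum. *)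

theory Defs
  imports "HOL-Computational_Algebra.Polynomial" "HOL-Library.Product_Plus"
begin

text \<open>D is the action of the derivation (making 'v a C[D]-module);
L l and N l are the lambda-actions of the free generators L, N evaluated at the complex
number l.  The relations are [D, a_l] = - l a_l and [a_l, b_m] = [a_l b]_(l+m) for the
generators, written out using the HV lambda-brackets:
[L_l L]_(l+m) = (l - m) L_(l+m), [L_l N]_(l+m) = - m N_(l+m), [N_l L]_(l+m) = l N_(l+m),
[N_l N] = 0.\<close>

definition conformal_HV_module ::
  "(complex \<Rightarrow> 'v::ab_group_add \<Rightarrow> 'v) \<Rightarrow> ('v \<Rightarrow> 'v) \<Rightarrow> (complex \<Rightarrow> 'v \<Rightarrow> 'v) \<Rightarrow> (complex \<Rightarrow> 'v \<Rightarrow> 'v) \<Rightarrow> bool"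
  where
  "conformal_HV_module sc D L N \<longleftrightarrow>
     (\<forall>c u w. D (u + w) = D u + D w \<and> D (sc c u) = sc c (D u)) \<and>
     (\<forall>l c u w. L l (u + w) = L l u + L l w \<and> L l (sc c u) = sc c (L l u) \<and>
                N l (u + w) = N l u + N l w \<and> N l (sc c u) = sc c (N l u)) \<and>
     (\<forall>l u. L l (D u) = D (L l u) + sc l (L l u)) \<and>
     (\<forall>l u. N l (D u) = D (N l u) + sc l (N l u)) \<and>
     (\<forall>l m u. L l (L m u) - L m (L l u) = sc (l - m) (L (l + m) u)) \<and>
     (\<forall>l m u. L l (N m u) - N m (L l u) = sc (- m) (N (l + m) u)) \<and>
     (\<forall>l m u. N l (L m u) - L m (N l u) = sc l (N (l + m) u)) \<and>
     (\<forall>l m u. N l (N m u) - N m (N l u) = 0)"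

definition HV_hom ::
  "(complex \<Rightarrow> 'v::ab_group_add \<Rightarrow> 'v) \<Rightarrow> ('v \<Rightarrow> 'v) \<Rightarrow> (complex \<Rightarrow> 'v \<Rightarrow> 'v) \<Rightarrow> (complex \<Rightarrow> 'v \<Rightarrow> 'v) \<Rightarrow>
   (complex \<Rightarrow> 'w::ab_group_add \<Rightarrow> 'w) \<Rightarrow> ('w \<Rightarrow> 'w) \<Rightarrow> (complex \<Rightarrow> 'w \<Rightarrow> 'w) \<Rightarrow> (complex \<Rightarrow> 'w \<Rightarrow> 'w) \<Rightarrow>
   ('v \<Rightarrow> 'w) \<Rightarrow> bool"
  where
  "HV_hom sc D L N sc' D' L' N' g \<longleftrightarrow>
     (\<forall>u w. g (u + w) = g u + g w) \<and> (\<forall>c u. g (sc c u) = sc' c (g u)) \<and>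
     (\<forall>u. g (D u) = D' (g u)) \<and>
     (\<forall>l u. g (L l u) = L' l (g u) \<and> g (N l u) = N' l (g u))"

text \<open>An element (p, c) stands
for p(D) v_Delta + c c_gamma.  Bivariate polynomials f(D, l) are of type
complex poly poly: the outer variable is lambda, the coefficients are polynomials in D;
so poly f [:l:] is the polynomial f(D, l) in D.  pcompose p [:l,1:] is p(D + l).\<close>

type_synonym HVE = "complex poly \<times> complex"

definition E_sc :: "complex \<Rightarrow> HVE \<Rightarrow> HVE" where
  "E_sc c w = (smult c (fst w), c * snd w)"

definition E_D :: "complex \<Rightarrow> complex poly \<Rightarrow> HVE \<Rightarrow> HVE" where
  "E_D \<gamma> a w = (pCons 0 (fst w) + smult (snd w) a, \<gamma> * snd w)"

definition E_L :: "complex \<Rightarrow> complex \<Rightarrow> complex poly poly \<Rightarrow> complex \<Rightarrow> HVE \<Rightarrow> HVE" where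
  "E_L \<alpha> \<Delta> f l w =
     (pcompose (fst w) [:l, 1:] * [:\<alpha> + \<Delta> * l, 1:] + smult (snd w) (poly f [:l:]), 0)"

definition E_N :: "complex \<Rightarrow> complex poly poly \<Rightarrow> complex \<Rightarrow> HVE \<Rightarrow> HVE" where
  "E_N \<beta> k l w = (smult \<beta> (pcompose (fst w) [:l, 1:]) + smult (snd w) (poly k [:l:]), 0)"

text \<open>The data (f, k, a) define an extension 0 -> V(alpha,beta,Delta) -> E -> C c_gamma -> 0
iff E is a conformal HV-module (the inclusion p |-> (p,0) and projection (p,c) |-> c are
then automatically module maps).\<close>
definition is_HV_ext ::
  "complex \<Rightarrow> complex \<Rightarrow> complex \<Rightarrow> complex \<Rightarrow> complex poly poly \<Rightarrow> complex poly poly \<Rightarrow> complex poly \<Rightarrow> bool"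
  where
  "is_HV_ext \<alpha> \<beta> \<gamma> \<Delta> f k a \<longleftrightarrow> conformal_HV_module E_sc (E_D \<gamma> a) (E_L \<alpha> \<Delta> f) (E_N \<beta> k)"

definition HV_ext_equiv ::
  "complex \<Rightarrow> complex \<Rightarrow> complex \<Rightarrow> complex \<Rightarrow>
   complex poly poly \<Rightarrow> complex poly poly \<Rightarrow> complex poly \<Rightarrow>
   complex poly poly \<Rightarrow> complex poly poly \<Rightarrow> complex poly \<Rightarrow> bool"
  where
  "HV_ext_equiv \<alpha> \<beta> \<gamma> \<Delta> f k a f' k' a' \<longleftrightarrow>
     (\<exists>g. HV_hom E_sc (E_D \<gamma> a) (E_L \<alpha> \<Delta> f) (E_N \<beta> k)
                E_sc (E_D \<gamma> a') (E_L \<alpha> \<Delta> f') (E_N \<beta> k') g \<and>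
          (\<forall>p. g (p, 0) = (p, 0)) \<and> (\<forall>w. snd (g w) = snd w))"

text \<open>Trivial = equivalent to the direct sum V(alpha,beta,Delta) (+) C c_gamma,
which is the extension with f = 0, k = 0, a = 0.\<close>
definition trivial_HV_ext ::
  "complex \<Rightarrow> complex \<Rightarrow> complex \<Rightarrow> complex \<Rightarrow> complex poly poly \<Rightarrow> complex poly poly \<Rightarrow> complex poly \<Rightarrow> bool"
  where
  "trivial_HV_ext \<alpha> \<beta> \<gamma> \<Delta> f k a \<longleftrightarrow> HV_ext_equiv \<alpha> \<beta> \<gamma> \<Delta> f k a 0 0 0"

end

theory Submission
  imports Defs
begin
lemma peq: fixes p q :: "complex poly" shows "p = q \<longleftrightarrow> (\<forall>x. poly p x = poly q x)"
  by (metis poly_eq_poly_eq_iff ext)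



lemma ext_I:
  assumes C3: "\<And>l x. (x+l-\<gamma>) * poly (poly f [:l:]) x = poly a (l+x) * (x+\<alpha>+\<Delta>*l)"
  and C4: "\<And>l x. (x+l-\<gamma>) * poly (poly k [:l:]) x = \<beta> * poly a (l+x)"
  and C5: "\<And>l m x. poly (poly f [:m:]) (l+x) * (x+\<alpha>+\<Delta>*l) - poly (poly f [:l:]) (m+x) * (x+\<alpha>+\<Delta>*m) = (l-m) * poly (poly f [:l+m:]) x"
  and C6: "\<And>l m x. poly (poly k [:m:]) (l+x) * (x+\<alpha>+\<Delta>*l) - \<beta> * poly (poly f [:l:]) (m+x) = -m * poly (poly k [:l+m:]) x"
  and C8: "\<And>l m x. \<beta> * poly (poly k [:m:]) (l+x) = \<beta> * poly (poly k [:l:]) (m+x)"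
  shows "is_HV_ext \<alpha> \<beta> \<gamma> \<Delta> f k a"
  unfolding is_HV_ext_def conformal_HV_module_def
  apply (intro conjI allI)
  apply (simp_all add: prod_eq_iff peq E_L_def E_D_def E_N_def E_sc_def poly_pcompose split_beta algebra_simps)
  subgoal for l u apply (rule allI) subgoal for x using C3[of x l] by algebra done
  subgoal for l u apply (rule allI) subgoal for x using C4[of x l] by algebra done
  subgoal for l m u apply (rule allI) subgoal for x using C5[of m l x] by algebra done
  subgoal for l m u apply (rule allI) subgoal for x using C6[of m l x] by algebra done
  subgoal for l m u apply (rule allI) subgoal for x using C6[of l m x] by (simp add: add.commute) algebra done
  subgoal for l m u using C8[of l m] by auto
  done




lemma equiv_I:
  assumes F: "\<And>l. poly f [:l:] = poly f' [:l:] + [:\<alpha>+\<Delta>*l,1:] * pcompose \<phi> [:l,1:]"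
  and K: "\<And>l. poly k [:l:] = poly k' [:l:] + smult \<beta> (pcompose \<phi> [:l,1:])"
  and A: "a = a' + [:-\<gamma>,1:] * \<phi>"
  shows "HV_ext_equiv \<alpha> \<beta> \<gamma> \<Delta> f k a f' k' a'"
  unfolding HV_ext_equiv_def HV_hom_def
  apply (rule exI[of _ "\<lambda>w. (fst w + smult (snd w) \<phi>, snd w)"])
  apply (simp add: prod_eq_iff peq E_L_def E_D_def E_N_def E_sc_def poly_pcompose F K A algebra_simps)
  done

lemma equiv_D:
  assumes "HV_ext_equiv \<alpha> \<beta> \<gamma> \<Delta> f k a f' k' a'"
  shows "\<exists>\<phi>. (\<forall>l. poly f [:l:] = poly f' [:l:] + [:\<alpha>+\<Delta>*l,1:] * pcompose \<phi> [:l,1:]) \<and>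
    (\<forall>l. poly k [:l:] = poly k' [:l:] + smult \<beta> (pcompose \<phi> [:l,1:])) \<and>
    a = a' + [:-\<gamma>,1:] * \<phi>"
proof -
  obtain g where H: "HV_hom E_sc (E_D \<gamma> a) (E_L \<alpha> \<Delta> f) (E_N \<beta> k)
                E_sc (E_D \<gamma> a') (E_L \<alpha> \<Delta> f') (E_N \<beta> k') g"
     and g0: "\<And>p. g (p, 0) = (p, 0)" and gs: "\<And>w. snd (g w) = snd w"
    using assms unfolding HV_ext_equiv_def by blast
  define \<phi> where "\<phi> = fst (g (0,1))"
  have g01: "g (0,1) = (\<phi>, 1)" using gs[of "(0,1)"] unfolding \<phi>_def by (metis prod.collapse snd_conv)
  have add: "\<And>u w. g (u + w) = g u + g w" and sc: "\<And>c u. g (E_sc c u) = E_sc c (g u)"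
    and gD: "\<And>u. g (E_D \<gamma> a u) = E_D \<gamma> a' (g u)"
    and gL: "\<And>l u. g (E_L \<alpha> \<Delta> f l u) = E_L \<alpha> \<Delta> f' l (g u)"
    and gN: "\<And>l u. g (E_N \<beta> k l u) = E_N \<beta> k' l (g u)"
    using H unfolding HV_hom_def by blast+
  have gpc: "g (p, c) = (p + smult c \<phi>, c)" for p c
  proof -
    have "(p, c) = (p, 0) + E_sc c (0,1)" by (simp add: E_sc_def)
    then have "g (p,c) = g (p,0) + E_sc c (g (0,1))" using add sc by metis
    then show ?thesis using g0 g01 by (simp add: E_sc_def)
  qed
  have "g (E_D \<gamma> a (0,1)) = E_D \<gamma> a' (g (0,1))" by (rule gD)
  then have A: "a = a' + [:-\<gamma>,1:] * \<phi>"
    by (simp add: gpc g01 E_D_def peq algebra_simps)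
  have F: "poly f [:l:] = poly f' [:l:] + [:\<alpha>+\<Delta>*l,1:] * pcompose \<phi> [:l,1:]" for l
  proof -
    have "g (E_L \<alpha> \<Delta> f l (0,1)) = E_L \<alpha> \<Delta> f' l (g (0,1))" by (rule gL)
    then show ?thesis by (simp add: gpc g01 E_L_def peq poly_pcompose algebra_simps)
  qed
  have K: "poly k [:l:] = poly k' [:l:] + smult \<beta> (pcompose \<phi> [:l,1:])" for l
  proof -
    have "g (E_N \<beta> k l (0,1)) = E_N \<beta> k' l (g (0,1))" by (rule gN)
    then show ?thesis by (simp add: gpc g01 E_N_def peq poly_pcompose algebra_simps)
  qed
  show ?thesis using A F K by blast
qed




lemma ext_D:
  assumes "is_HV_ext \<alpha> \<beta> \<gamma> \<Delta> f k a"
  shows "(x+l-\<gamma>) * poly (poly f [:l:]) x = poly a (x+l) * (x+\<alpha>+\<Delta>*l)"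
    "(x+l-\<gamma>) * poly (poly k [:l:]) x = \<beta> * poly a (x+l)"
proof -
  from assms have 1: "E_L \<alpha> \<Delta> f l (E_D \<gamma> a (0,1)) = E_D \<gamma> a (E_L \<alpha> \<Delta> f l (0,1)) + E_sc l (E_L \<alpha> \<Delta> f l (0,1))"
    and 2: "E_N \<beta> k l (E_D \<gamma> a (0,1)) = E_D \<gamma> a (E_N \<beta> k l (0,1)) + E_sc l (E_N \<beta> k l (0,1))"
    unfolding is_HV_ext_def conformal_HV_module_def by blast+
  from 1 have "poly (fst (E_L \<alpha> \<Delta> f l (E_D \<gamma> a (0,1)))) x = poly (fst (E_D \<gamma> a (E_L \<alpha> \<Delta> f l (0,1)) + E_sc l (E_L \<alpha> \<Delta> f l (0,1)))) x" by simp
  then show "(x+l-\<gamma>) * poly (poly f [:l:]) x = poly a (x+l) * (x+\<alpha>+\<Delta>*l)"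
    by (simp add: E_L_def E_D_def E_sc_def poly_pcompose algebra_simps)
  from 2 have "poly (fst (E_N \<beta> k l (E_D \<gamma> a (0,1)))) x = poly (fst (E_D \<gamma> a (E_N \<beta> k l (0,1)) + E_sc l (E_N \<beta> k l (0,1)))) x" by simp
  then show "(x+l-\<gamma>) * poly (poly k [:l:]) x = \<beta> * poly a (x+l)"
    by (simp add: E_N_def E_D_def E_sc_def poly_pcompose algebra_simps)
qed

lemma classify:
  assumes E: "is_HV_ext \<alpha> \<beta> \<gamma> \<Delta> f k a"
  shows "\<exists>\<phi> c0. (\<forall>l. poly f [:l:] = [:c0:] + [:\<alpha>+\<Delta>*l,1:] * pcompose \<phi> [:l,1:]) \<and>
    (\<forall>l. poly k [:l:] = smult \<beta> (pcompose \<phi> [:l,1:])) \<and>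
    a = [:c0:] + [:-\<gamma>,1:] * \<phi> \<and> (c0 \<noteq> 0 \<longrightarrow> \<alpha> + \<gamma> = 0 \<and> \<beta> = 0 \<and> \<Delta> = 1)"
proof -
  define \<phi> where "\<phi> = synthetic_div a \<gamma>"
  define c0 where "c0 = poly a \<gamma>"
  have aeq: "a = [:c0:] + [:-\<gamma>,1:] * \<phi>"
    using synthetic_div_correct'[of \<gamma> a] unfolding \<phi>_def c0_def by (simp add: algebra_simps)
  have Aev: "poly a y = c0 + (y - \<gamma>) * poly \<phi> y" for y
    by (subst aeq) (simp add: algebra_simps)
  note C3 = ext_D(1)[OF E] and C4 = ext_D(2)[OF E]
  have Z: "c0 * (\<alpha> + \<gamma> + (\<Delta> - 1) * l) = 0" for l
    using C3[of "\<gamma> - l" l] Aev[of \<gamma>] by (simp add: algebra_simps)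
  have Zk: "\<beta> * c0 = 0"
    using C4[of "\<gamma>" 0] Aev[of \<gamma>] by (simp add: algebra_simps)
  have P: "c0 \<noteq> 0 \<longrightarrow> \<alpha> + \<gamma> = 0 \<and> \<beta> = 0 \<and> \<Delta> = 1"
  proof
    assume c: "c0 \<noteq> 0"
    have "\<alpha> + \<gamma> = 0" using Z[of 0] c by simp
    moreover have "\<Delta> = 1" using Z[of 1] c \<open>\<alpha> + \<gamma> = 0\<close> by simp
    moreover have "\<beta> = 0" using Zk c by simp
    ultimately show "\<alpha> + \<gamma> = 0 \<and> \<beta> = 0 \<and> \<Delta> = 1" by simp
  qed
  have lnz: "[:l - \<gamma>, 1:] \<noteq> (0::complex poly)" for l by simp
  have F: "poly f [:l:] = [:c0:] + [:\<alpha>+\<Delta>*l,1:] * pcompose \<phi> [:l,1:]" for l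
  proof -
    have "[:l - \<gamma>, 1:] * (poly f [:l:] - ([:c0:] + [:\<alpha>+\<Delta>*l,1:] * pcompose \<phi> [:l,1:])) = 0"
      unfolding peq
    proof
      fix x
      have "(x+l-\<gamma>) * poly (poly f [:l:]) x = poly a (x+l) * (x+\<alpha>+\<Delta>*l)" by (rule C3)
      then show "poly ([:l - \<gamma>, 1:] * (poly f [:l:] - ([:c0:] + [:\<alpha>+\<Delta>*l,1:] * pcompose \<phi> [:l,1:]))) x = poly 0 x"
        using Aev[of "x+l"] Z[of l] unfolding add.commute[of x l]
        by (simp add: poly_pcompose) algebra
    qed
    then show ?thesis using lnz by (metis mult_eq_0_iff right_minus_eq)
  qed
  have K: "poly k [:l:] = smult \<beta> (pcompose \<phi> [:l,1:])" for l
  proof -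
    have "[:l - \<gamma>, 1:] * (poly k [:l:] - smult \<beta> (pcompose \<phi> [:l,1:])) = 0"
      unfolding peq
    proof
      fix x
      have "(x+l-\<gamma>) * poly (poly k [:l:]) x = \<beta> * poly a (x+l)" by (rule C4)
      then show "poly ([:l - \<gamma>, 1:] * (poly k [:l:] - smult \<beta> (pcompose \<phi> [:l,1:]))) x = poly 0 x"
        using Aev[of "x+l"] Zk unfolding add.commute[of x l]
        by (simp add: poly_pcompose) algebra
    qed
    then show ?thesis using lnz by (metis mult_eq_0_iff right_minus_eq)
  qed
  show ?thesis using F K aeq P by blast
qed


lemma fam_ext:
  assumes F: "\<And>l. poly f [:l:] = [:cc:] + [:\<alpha>+\<Delta>*l,1:] * pcompose \<phi> [:l,1:]"
  and K: "\<And>l. poly k [:l:] = smult \<beta> (pcompose \<phi> [:l,1:])"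
  and A: "a = [:cc:] + [:-\<gamma>,1:] * \<phi>"
  and P: "cc \<noteq> 0 \<longrightarrow> \<alpha> + \<gamma> = 0 \<and> \<beta> = 0 \<and> \<Delta> = 1"
  shows "is_HV_ext \<alpha> \<beta> \<gamma> \<Delta> f k a"
proof (cases "cc = 0")
  case True
  show ?thesis
    apply (rule ext_I)
    apply (simp_all add: F K A True poly_pcompose add_ac)
    apply algebra+
    done
next
  case False
  with P have h: "\<alpha> = - \<gamma>" "\<beta> = 0" "\<Delta> = 1" by (simp_all add: eq_neg_iff_add_eq_0)
  show ?thesis
    apply (rule ext_I)
    apply (simp_all add: F K A h poly_pcompose add_ac)
    apply algebra+
    done
qed


lemma triv_iff:
  "trivial_HV_ext \<alpha> \<beta> \<gamma> \<Delta> f k a \<longleftrightarrow>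
   (\<exists>\<phi>. (\<forall>l. poly f [:l:] = [:\<alpha> + \<Delta> * l, 1:] * pcompose \<phi> [:l, 1:]) \<and>
         (\<forall>l. poly k [:l:] = smult \<beta> (pcompose \<phi> [:l, 1:])) \<and>
         a = [:- \<gamma>, 1:] * \<phi>)"
proof
  assume "trivial_HV_ext \<alpha> \<beta> \<gamma> \<Delta> f k a"
  then show "\<exists>\<phi>. (\<forall>l. poly f [:l:] = [:\<alpha> + \<Delta> * l, 1:] * pcompose \<phi> [:l, 1:]) \<and>
         (\<forall>l. poly k [:l:] = smult \<beta> (pcompose \<phi> [:l, 1:])) \<and>
         a = [:- \<gamma>, 1:] * \<phi>"
    unfolding trivial_HV_ext_def using equiv_D by fastforce
next
  assume "\<exists>\<phi>. (\<forall>l. poly f [:l:] = [:\<alpha> + \<Delta> * l, 1:] * pcompose \<phi> [:l, 1:]) \<and>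
         (\<forall>l. poly k [:l:] = smult \<beta> (pcompose \<phi> [:l, 1:])) \<and>
         a = [:- \<gamma>, 1:] * \<phi>"
  then obtain \<phi> where "\<And>l. poly f [:l:] = [:\<alpha> + \<Delta> * l, 1:] * pcompose \<phi> [:l, 1:]"
     "\<And>l. poly k [:l:] = smult \<beta> (pcompose \<phi> [:l, 1:])" "a = [:- \<gamma>, 1:] * \<phi>" by blast
  then show "trivial_HV_ext \<alpha> \<beta> \<gamma> \<Delta> f k a"
    unfolding trivial_HV_ext_def by (intro equiv_I[where \<phi>=\<phi>]) simp_all
qed

lemma nontriv:
  assumes "is_HV_ext \<alpha> \<beta> \<gamma> \<Delta> f k a" "\<not> trivial_HV_ext \<alpha> \<beta> \<gamma> \<Delta> f k a"
  shows "\<exists>a0. a0 \<noteq> 0 \<and> (\<alpha> + \<gamma> = 0 \<and> \<beta> = 0 \<and> \<Delta> = 1) \<and> HV_ext_equiv \<alpha> \<beta> \<gamma> \<Delta> f k a [:[:a0:]:] 0 [:a0:]"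
proof -
  obtain \<phi> c0 where F: "\<And>l. poly f [:l:] = [:c0:] + [:\<alpha>+\<Delta>*l,1:] * pcompose \<phi> [:l,1:]"
    and K: "\<And>l. poly k [:l:] = smult \<beta> (pcompose \<phi> [:l,1:])"
    and A: "a = [:c0:] + [:-\<gamma>,1:] * \<phi>" and P: "c0 \<noteq> 0 \<longrightarrow> \<alpha> + \<gamma> = 0 \<and> \<beta> = 0 \<and> \<Delta> = 1"
    using classify[OF assms(1)] by blast
  have c: "c0 \<noteq> 0"
  proof
    assume "c0 = 0"
    then have "trivial_HV_ext \<alpha> \<beta> \<gamma> \<Delta> f k a" unfolding triv_iff using F K A by auto
    then show False using assms(2) by blast
  qed
  have "HV_ext_equiv \<alpha> \<beta> \<gamma> \<Delta> f k a [:[:c0:]:] 0 [:c0:]"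
    by (rule equiv_I[where \<phi>=\<phi>]) (simp_all add: F K A)
  then show ?thesis using c P by blast
qed

lemma example:
  assumes "\<alpha> + \<gamma> = 0" "\<beta> = 0" "\<Delta> = 1" "a0 \<noteq> 0"
  shows "is_HV_ext \<alpha> \<beta> \<gamma> \<Delta> [:[:a0:]:] 0 [:a0:] \<and> \<not> trivial_HV_ext \<alpha> \<beta> \<gamma> \<Delta> [:[:a0:]:] 0 [:a0:]"
proof
  show "is_HV_ext \<alpha> \<beta> \<gamma> \<Delta> [:[:a0:]:] 0 [:a0:]"
    by (rule fam_ext[where \<phi>=0 and cc=a0]) (simp_all add: assms)
  show "\<not> trivial_HV_ext \<alpha> \<beta> \<gamma> \<Delta> [:[:a0:]:] 0 [:a0:]"
  proof
    assume "trivial_HV_ext \<alpha> \<beta> \<gamma> \<Delta> [:[:a0:]:] 0 [:a0:]"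
    then obtain \<phi> where "[:a0:] = [:- \<gamma>, 1:] * \<phi>" unfolding triv_iff by blast
    then have "poly [:a0:] \<gamma> = poly ([:- \<gamma>, 1:] * \<phi>) \<gamma>" by simp
    then show False using assms(4) by simp
  qed
qed

theorem corollary6p2:
  fixes \<alpha> \<beta> \<gamma> \<Delta> :: complex
  assumes "(\<Delta>, \<beta>) \<noteq> (0, 0)"
  shows
    "((\<exists>f k a. is_HV_ext \<alpha> \<beta> \<gamma> \<Delta> f k a \<and> \<not> trivial_HV_ext \<alpha> \<beta> \<gamma> \<Delta> f k a)
        \<longleftrightarrow> (\<alpha> + \<gamma> = 0 \<and> \<beta> = 0 \<and> \<Delta> = 1))
   \<and> (\<alpha> + \<gamma> = 0 \<and> \<beta> = 0 \<and> \<Delta> = 1 \<longrightarrow>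
        (\<forall>a0. a0 \<noteq> 0 \<longrightarrow>
            is_HV_ext \<alpha> \<beta> \<gamma> \<Delta> [:[:a0:]:] 0 [:a0:] \<and>
            \<not> trivial_HV_ext \<alpha> \<beta> \<gamma> \<Delta> [:[:a0:]:] 0 [:a0:]) \<and>
        (\<forall>f k a. is_HV_ext \<alpha> \<beta> \<gamma> \<Delta> f k a \<and> \<not> trivial_HV_ext \<alpha> \<beta> \<gamma> \<Delta> f k a \<longrightarrow>
            (\<exists>a0. a0 \<noteq> 0 \<and> HV_ext_equiv \<alpha> \<beta> \<gamma> \<Delta> f k a [:[:a0:]:] 0 [:a0:])))
   \<and> (\<forall>f k a. (is_HV_ext \<alpha> \<beta> \<gamma> \<Delta> f k a \<and> trivial_HV_ext \<alpha> \<beta> \<gamma> \<Delta> f k a) \<longleftrightarrow>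
        (\<exists>\<phi>. (\<forall>l. poly f [:l:] = [:\<alpha> + \<Delta> * l, 1:] * pcompose \<phi> [:l, 1:]) \<and>
              (\<forall>l. poly k [:l:] = smult \<beta> (pcompose \<phi> [:l, 1:])) \<and>
              a = [:- \<gamma>, 1:] * \<phi>))"
proof (intro conjI allI impI)
  show "(\<exists>f k a. is_HV_ext \<alpha> \<beta> \<gamma> \<Delta> f k a \<and> \<not> trivial_HV_ext \<alpha> \<beta> \<gamma> \<Delta> f k a)
        \<longleftrightarrow> (\<alpha> + \<gamma> = 0 \<and> \<beta> = 0 \<and> \<Delta> = 1)"
  proof
    assume "\<exists>f k a. is_HV_ext \<alpha> \<beta> \<gamma> \<Delta> f k a \<and> \<not> trivial_HV_ext \<alpha> \<beta> \<gamma> \<Delta> f k a"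
    then show "\<alpha> + \<gamma> = 0 \<and> \<beta> = 0 \<and> \<Delta> = 1" using nontriv by blast
  next
    assume "\<alpha> + \<gamma> = 0 \<and> \<beta> = 0 \<and> \<Delta> = 1"
    then show "\<exists>f k a. is_HV_ext \<alpha> \<beta> \<gamma> \<Delta> f k a \<and> \<not> trivial_HV_ext \<alpha> \<beta> \<gamma> \<Delta> f k a"
    proof -
      have "is_HV_ext \<alpha> \<beta> \<gamma> \<Delta> [:[:1:]:] 0 [:1:] \<and> \<not> trivial_HV_ext \<alpha> \<beta> \<gamma> \<Delta> [:[:1:]:] 0 [:1:]"
        using example[of \<alpha> \<gamma> \<beta> \<Delta> 1] \<open>\<alpha> + \<gamma> = 0 \<and> \<beta> = 0 \<and> \<Delta> = 1\<close> by simp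
      then show ?thesis by blast
    qed
  qed
next
  fix a0 :: complex
  assume "\<alpha> + \<gamma> = 0 \<and> \<beta> = 0 \<and> \<Delta> = 1" "a0 \<noteq> 0"
  then show "is_HV_ext \<alpha> \<beta> \<gamma> \<Delta> [:[:a0:]:] 0 [:a0:]"
      "\<not> trivial_HV_ext \<alpha> \<beta> \<gamma> \<Delta> [:[:a0:]:] 0 [:a0:]" using example by blast+
next
  fix f k a
  assume "is_HV_ext \<alpha> \<beta> \<gamma> \<Delta> f k a \<and> \<not> trivial_HV_ext \<alpha> \<beta> \<gamma> \<Delta> f k a"
  then show "\<exists>a0. a0 \<noteq> 0 \<and> HV_ext_equiv \<alpha> \<beta> \<gamma> \<Delta> f k a [:[:a0:]:] 0 [:a0:]"
    using nontriv by blast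
next
  fix f k a
  show "(is_HV_ext \<alpha> \<beta> \<gamma> \<Delta> f k a \<and> trivial_HV_ext \<alpha> \<beta> \<gamma> \<Delta> f k a) \<longleftrightarrow>
        (\<exists>\<phi>. (\<forall>l. poly f [:l:] = [:\<alpha> + \<Delta> * l, 1:] * pcompose \<phi> [:l, 1:]) \<and>
              (\<forall>l. poly k [:l:] = smult \<beta> (pcompose \<phi> [:l, 1:])) \<and>
              a = [:- \<gamma>, 1:] * \<phi>)" (is "_ \<longleftrightarrow> ?R")
  proof
    assume ?R
    then obtain \<phi> where F: "\<And>l. poly f [:l:] = [:\<alpha> + \<Delta> * l, 1:] * pcompose \<phi> [:l, 1:]"
      and K: "\<And>l. poly k [:l:] = smult \<beta> (pcompose \<phi> [:l, 1:])" and A: "a = [:- \<gamma>, 1:] * \<phi>" by blast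
    have "is_HV_ext \<alpha> \<beta> \<gamma> \<Delta> f k a"
      by (rule fam_ext[where \<phi>=\<phi> and cc=0]) (simp_all add: F K A)
    then show "is_HV_ext \<alpha> \<beta> \<gamma> \<Delta> f k a \<and> trivial_HV_ext \<alpha> \<beta> \<gamma> \<Delta> f k a"
      using \<open>?R\<close> triv_iff by blast
  qed (use triv_iff in blast)
qed

end
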